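(* Let $a_c>b_c>0$, $k_e>0$, $a_e^2=a_c^2+k_e$, $b_e^2=b_c^2+k_e$, let $c$ be the ellipse $x^2/a_c^2+y^2/b_c^2=1$ and $e$ the ellipse $x^2/a_e^2+y^2/b_e^2=1$, with center $O$. Let $P_1P_2\dots P_N$ be an $N$-sided periodic billiard in $e$ with caustic $c$ and turning number $\tau$, and let $P_1'P_2'\dots P_N'$ be its conjugate billiard; indices are taken modulo $N$. Then: (i) If $N$ is even and $\tau$ is odd, the billiard is centrally symmetric with respect to $O$ (namely $P_{i+N/2}$ is the reflection of $P_i$ in $O$). (ii) If $N=2n+1$ is odd and $\tau$ is odd, the billiard is centrally symmetric with respect to $O$ to its conjugate billiard, with $P_i$ corresponding to $P'_{i+n}$, i.e. $P'_{i+n}=-P_i$ for all $i$. (iii) If $N=2n+1$ is odd and $\tau$ is even, the conjugate billiard coincides with the original one, and $P_i=P'_{i+n}$ for all $i$.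
   Context: A billiard in $e$ with caustic $c$ is a sequence $(P_i)_{i\in\mathbb Z}$ of points of $e$ with $P_{i+1}\neq P_i$ such that every line $[P_i,P_{i+1}]$ is tangent to $c$ and $[P_{i-1},P_i]\neq[P_i,P_{i+1}]$; it is $N$-sided periodic if $P_{i+N}=P_i$ for all $i$, $N$ being the least such positive integer. The vertices are traversed counterclockwise. Let $Q_i$ be the contact point of $[P_i,P_{i+1}]$ with $c$. With $\alpha(x,y)=(\frac{a_e}{a_c}x,\frac{b_e}{b_c}y)$ (so $\alpha(c)=e$), the conjugate billiard is the billiard in $e$ with caustic $c$ with vertices $P_i'=\alpha(Q_i)$. The signed exterior angle $\theta_i$ at $P_i$ is the signed angle from the direction of $P_{i-1}P_i$ to the direction of $P_iP_{i+1}$; for a periodic billiard $\sum_{i=1}^N\theta_i=2\tau\pi$ with $\tau\in\mathbb N$, called the turning number (the number of loops around $O$). *)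

theory Defs
  imports "HOL-Analysis.Analysis"
begin

text \<open>Points of the plane are represented as complex numbers; O is the origin.\<close>

definition on_ellipse :: "real \<Rightarrow> real \<Rightarrow> complex \<Rightarrow> bool" where
  "on_ellipse a b z \<longleftrightarrow> (Re z)\<^sup>2 / a\<^sup>2 + (Im z)\<^sup>2 / b\<^sup>2 = 1"

definition line_thru :: "complex \<Rightarrow> complex \<Rightarrow> complex set" where
  "line_thru P R = {P + complex_of_real t * (R - P) | t. True}"

definition tangent_to :: "real \<Rightarrow> real \<Rightarrow> complex \<Rightarrow> complex \<Rightarrow> bool" where
  "tangent_to a b P R \<longleftrightarrow> (\<exists>!Q. Q \<in> line_thru P R \<and> on_ellipse a b Q)"

definition contact_point :: "real \<Rightarrow> real \<Rightarrow> complex \<Rightarrow> complex \<Rightarrow> complex" where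
  "contact_point a b P R = (THE Q. Q \<in> line_thru P R \<and> on_ellipse a b Q)"

definition billiard :: "real \<Rightarrow> real \<Rightarrow> real \<Rightarrow> real \<Rightarrow> (int \<Rightarrow> complex) \<Rightarrow> bool" where
  "billiard ae be ac bc P \<longleftrightarrow>
     (\<forall>i. on_ellipse ae be (P i) \<and> P (i + 1) \<noteq> P i \<and> tangent_to ac bc (P i) (P (i + 1))
          \<and> line_thru (P (i - 1)) (P i) \<noteq> line_thru (P i) (P (i + 1)))"

definition counterclockwise :: "(int \<Rightarrow> complex) \<Rightarrow> bool" where
  "counterclockwise P \<longleftrightarrow> (\<forall>i. Im (cnj (P i) * P (i + 1)) > 0)"

definition least_period :: "(int \<Rightarrow> complex) \<Rightarrow> nat \<Rightarrow> bool" where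
  "least_period P N \<longleftrightarrow> N > 0 \<and> (\<forall>i. P (i + int N) = P i)
      \<and> (\<forall>m. 0 < m \<and> m < N \<longrightarrow> \<not> (\<forall>i. P (i + int m) = P i))"

definition periodic_billiard :: "real \<Rightarrow> real \<Rightarrow> real \<Rightarrow> real \<Rightarrow> (int \<Rightarrow> complex) \<Rightarrow> nat \<Rightarrow> bool" where
  "periodic_billiard ae be ac bc P N \<longleftrightarrow> billiard ae be ac bc P \<and> least_period P N"

text \<open>Signed exterior angle at P i, in (-pi, pi].\<close>
definition ext_angle :: "(int \<Rightarrow> complex) \<Rightarrow> int \<Rightarrow> real" where
  "ext_angle P i = Arg ((P (i + 1) - P i) / (P i - P (i - 1)))"

definition turning_number :: "(int \<Rightarrow> complex) \<Rightarrow> nat \<Rightarrow> nat \<Rightarrow> bool" where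
  "turning_number P N \<tau> \<longleftrightarrow> (\<Sum>i = 1..int N. ext_angle P i) = 2 * real \<tau> * pi"

definition alpha :: "real \<Rightarrow> real \<Rightarrow> real \<Rightarrow> real \<Rightarrow> complex \<Rightarrow> complex" where
  "alpha ae be ac bc z = Complex (ae / ac * Re z) (be / bc * Im z)"

definition conjugate_billiard :: "real \<Rightarrow> real \<Rightarrow> real \<Rightarrow> real \<Rightarrow> (int \<Rightarrow> complex) \<Rightarrow> int \<Rightarrow> complex" where
  "conjugate_billiard ae be ac bc P = (\<lambda>i. alpha ae be ac bc (contact_point ac bc (P i) (P (i + 1))))"

end

theory Submission
  imports Defs
begin

definition lft :: "real \<Rightarrow> real \<Rightarrow> real \<Rightarrow> real" where
  "lft a b t = t + arctan ((b - a) * sin t * cos t / (a * (cos t)\<^sup>2 + b * (sin t)\<^sup>2))"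

definition rad :: "real \<Rightarrow> real \<Rightarrow> real \<Rightarrow> real" where
  "rad a b t = sqrt ((a * cos t)\<^sup>2 + (b * sin t)\<^sup>2)"

lemma den_pos: "(a::real) > 0 \<Longrightarrow> b > 0 \<Longrightarrow> a * (cos t)\<^sup>2 + b * (sin t)\<^sup>2 > 0"
proof -
  assume a: "a > 0" "b > 0"
  have h: "min a b * (cos t)\<^sup>2 + min a b * (sin t)\<^sup>2 \<le> a * (cos t)\<^sup>2 + b * (sin t)\<^sup>2"
    using mult_right_mono[of "min a b" a "(cos t)\<^sup>2"] mult_right_mono[of "min a b" b "(sin t)\<^sup>2"]
    by (meson add_mono min.cobounded1 min.cobounded2 zero_le_power2)
  have "min a b * (cos t)\<^sup>2 + min a b * (sin t)\<^sup>2 = min a b"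
    by (simp add: distrib_left[symmetric])
  then show ?thesis using h a by linarith
qed

lemma rad_pos: "a > 0 \<Longrightarrow> b > 0 \<Longrightarrow> rad a b t > 0"
proof -
  assume a: "a > 0" "b > 0"
  have "cos t \<noteq> 0 \<or> sin t \<noteq> 0" using sin_cos_squared_add[of t] by (cases "cos t = 0") auto
  then have "(a * cos t)\<^sup>2 + (b * sin t)\<^sup>2 > 0" using a
    by (auto simp: add_pos_nonneg add_nonneg_pos)
  then show ?thesis unfolding rad_def by simp
qed

lemma lft_polar:
  assumes a: "a > 0" "b > 0"
  shows "a * cos t = rad a b t * cos (lft a b t) \<and> b * sin t = rad a b t * sin (lft a b t)"
proof -
  define D where "D = a * (cos t)\<^sup>2 + b * (sin t)\<^sup>2"
  define w where "w = (b - a) * sin t * cos t / D"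
  have D: "D > 0" using den_pos[OF a] D_def by simp
  have r: "rad a b t > 0" using rad_pos[OF a] .
  have sc: "(sin t)\<^sup>2 + (cos t)\<^sup>2 = 1" by simp
  have e1: "1 + w\<^sup>2 = (rad a b t / D)\<^sup>2"
  proof -
    have "(rad a b t)\<^sup>2 = (a * cos t)\<^sup>2 + (b * sin t)\<^sup>2" unfolding rad_def by simp
    moreover have "D\<^sup>2 + ((b - a) * sin t * cos t)\<^sup>2 = (a * cos t)\<^sup>2 * ((sin t)\<^sup>2 + (cos t)\<^sup>2) + (b * sin t)\<^sup>2 * ((sin t)\<^sup>2 + (cos t)\<^sup>2)"
      unfolding D_def by algebra
    then have "D\<^sup>2 + ((b - a) * sin t * cos t)\<^sup>2 = (a * cos t)\<^sup>2 + (b * sin t)\<^sup>2"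
      using sc by simp
    ultimately show ?thesis using D unfolding w_def by (simp add: power_divide field_simps)
  qed
  have sq: "sqrt (1 + w\<^sup>2) = rad a b t / D" using e1 r D by (simp add: real_sqrt_abs)
  have L: "lft a b t = t + arctan w" unfolding lft_def w_def D_def by simp
  have c1: "cos (lft a b t) = (cos t - w * sin t) * D / rad a b t"
    unfolding L cos_add cos_arctan sin_arctan sq using D r by (simp add: field_simps)
  have s1: "sin (lft a b t) = (sin t + w * cos t) * D / rad a b t"
    unfolding L sin_add cos_arctan sin_arctan sq using D r by (simp add: field_simps)
  have "(cos t - w * sin t) * D = cos t * D - (b - a) * sin t * cos t * sin t"
    unfolding w_def using D by (simp add: field_simps)
  also have "\<dots> = a * cos t * ((sin t)\<^sup>2 + (cos t)\<^sup>2)" unfolding D_def by algebra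
  finally have 1: "(cos t - w * sin t) * D = a * cos t" using sc by simp
  have "(sin t + w * cos t) * D = sin t * D + (b - a) * sin t * cos t * cos t"
    unfolding w_def using D by (simp add: field_simps)
  also have "\<dots> = b * sin t * ((sin t)\<^sup>2 + (cos t)\<^sup>2)" unfolding D_def by algebra
  finally have 2: "(sin t + w * cos t) * D = b * sin t" using sc by simp
  show ?thesis using 1 2 c1 s1 r by simp
qed

lemma lft_shift: "lft a b (t + pi) = lft a b t + pi"
  unfolding lft_def by simp

lemma rad_shift: "rad a b (t + pi) = rad a b t"
  unfolding rad_def by simp

lemma lft_bound: "\<bar>lft a b t - t\<bar> < pi / 2"
proof -
  define X where "X = (b - a) * sin t * cos t / (a * (cos t)\<^sup>2 + b * (sin t)\<^sup>2)"
  have "lft a b t - t = arctan X"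
    unfolding lft_def X_def by simp
  moreover have "- (pi/2) < arctan X" "arctan X < pi/2" by (rule arctan_lbound, rule arctan_ubound)
  ultimately show ?thesis by (auto simp: abs_less_iff)
qed


lemma shift_int:
  fixes f :: "real \<Rightarrow> real"
  assumes sh: "\<And>x. f (x + pi) = f x + pi"
  shows "f (x + of_int k * pi) = f x + of_int k * pi"
proof -
  have nat: "f (y + real n * pi) = f y + real n * pi" for y n
  proof (induction n)
    case 0 then show ?case by simp
  next
    case (Suc n)
    have "f (y + real (Suc n) * pi) = f ((y + real n * pi) + pi)" by (simp add: algebra_simps)
    also have "\<dots> = f y + real (Suc n) * pi" using sh[of "y + real n * pi"] Suc by (simp add: algebra_simps)
    finally show ?case .
  qed
  show ?thesis
  proof (cases "k \<ge> 0")
    case True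
    define n where "n = nat k"
    have k: "k = int n" using True n_def by simp
    show ?thesis using nat[of x n] k by simp
  next
    case False
    define n where "n = nat (- k)"
    have k: "k = - int n" using False n_def by simp
    have "f (x + of_int k * pi) + real n * pi = f (x + of_int k * pi + real n * pi)"
      using nat[of "x + of_int k * pi" n] by simp
    also have "x + of_int k * pi + real n * pi = x" using k by simp
    finally show ?thesis using k by simp
  qed
qed

lemma mono_shift:
  fixes f :: "real \<Rightarrow> real"
  assumes cont: "continuous_on UNIV f" and inj: "inj f" and sh: "\<And>x. f (x + pi) = f x + pi"
    and xy: "x < y"
  shows "f x < f y"
proof -
  obtain n :: nat where n: "(y - x) / pi < real n" using reals_Archimedean2 by blast
  then have yb: "y < x + real n * pi" using pi_gt_zero by (simp add: field_simps)
  have "real n * pi > 0" using yb xy by linarith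
  then have "0 < real n" using pi_gt_zero by (simp add: zero_less_mult_iff)
  then have fb: "f (x + real n * pi) = f x + real n * pi" "f x < f x + real n * pi"
    using shift_int[of f x "int n"] sh by auto
  have "(f x < f y \<and> f y < f (x + real n * pi)) \<or> (f (x + real n * pi) < f y \<and> f y < f x)"
    by (rule continuous_inj_imp_mono[OF xy yb continuous_on_subset[OF cont] inj_on_subset[OF inj]]) auto
  then show ?thesis using fb by auto
qed

lemma lft_cont:
  assumes a: "a > 0" "b > 0" shows "continuous_on UNIV (lft a b)"
proof -
  have d: "\<And>x. a * (cos x)\<^sup>2 + b * (sin x)\<^sup>2 \<noteq> 0" using den_pos[OF a] by (metis less_irrefl)
  show ?thesis unfolding lft_def[abs_def]
    by (intro continuous_intros) (simp add: d)
qed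

lemma lft_inj:
  assumes a: "a > 0" "b > 0"
  shows "inj (lft a b)"
proof (rule injI)
  fix x y assume e: "lft a b x = lft a b y"
  have px: "a * cos x = rad a b x * cos (lft a b x)" "b * sin x = rad a b x * sin (lft a b x)"
    using lft_polar[OF a] by auto
  have py: "a * cos y = rad a b y * cos (lft a b x)" "b * sin y = rad a b y * sin (lft a b x)"
    using lft_polar[OF a, of y] e by auto
  define l where "l = rad a b y / rad a b x"
  have rx: "rad a b x > 0" "rad a b y > 0" using rad_pos[OF a] by auto
  have "cos (lft a b x) = a * cos x / rad a b x" using px rx by simp
  then have "a * cos y = a * (l * cos x)" using py unfolding l_def by simp
  then have cy: "cos y = l * cos x" using a by simp
  have "sin (lft a b x) = b * sin x / rad a b x" using px rx by simp
  then have "b * sin y = b * (l * sin x)" using py unfolding l_def by simp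
  then have sy: "sin y = l * sin x" using a by simp
  have "1 = (l * sin x)\<^sup>2 + (l * cos x)\<^sup>2" using cy sy sin_cos_squared_add[of y] by simp
  also have "\<dots> = l\<^sup>2 * ((sin x)\<^sup>2 + (cos x)\<^sup>2)" by (simp only: power_mult_distrib distrib_left)
  finally have "l\<^sup>2 = 1" by simp
  moreover have "l > 0" using rx l_def by simp
  ultimately have "l = 1" by (simp add: power2_eq_1_iff) 
  then have "sin y = sin x \<and> cos y = cos x" using cy sy by simp
  then obtain n :: int where n: "y = x + 2 * pi * n" using sin_cos_eq_iff by blast
  have "lft a b y = lft a b x + of_int (2 * n) * pi"
    using shift_int[of "lft a b" x "2 * n"] lft_shift n by (simp add: algebra_simps)
  then have "of_int (2 * n) * pi = 0" using e by simp
  then have "n = 0" by simp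
  then show "x = y" using n by simp
qed

lemma lft_mono: assumes "a > 0" "b > 0" "x < y" shows "lft a b x < lft a b y"
proof -
  have sh: "\<And>t. lft a b (t + pi) = lft a b t + pi" by (rule lft_shift)
  show ?thesis by (rule mono_shift[OF lft_cont[OF assms(1,2)] lft_inj[OF assms(1,2)] sh assms(3)])
qed


lemma prod_alg:
  fixes A B a b c d :: real
  assumes A: "A > 1" "B > 1" and h: "A * a * c + B * b * d = 1"
    and u: "a\<^sup>2 + b\<^sup>2 = 1" and v: "c\<^sup>2 + d\<^sup>2 = 1"
  shows "(A * a * d - B * b * c) * (B * a * d - A * b * c) > 0"
proof -
  define p where "p = a * c"
  define q where "q = b * d"
  have hp: "A * p + B * q = 1" using h unfolding p_def q_def by (simp add: mult.assoc)
  have id1: "(A * a * d - B * b * c) * (B * a * d - A * b * c) = A * B * (a * d - b * c)\<^sup>2 - (A - B)\<^sup>2 * (p * q)"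
    unfolding p_def q_def by (simp add: power2_eq_square algebra_simps)
  have lag: "(a * d - b * c)\<^sup>2 = (a\<^sup>2 + b\<^sup>2) * (c\<^sup>2 + d\<^sup>2) - (p + q)\<^sup>2"
    unfolding p_def q_def by (simp add: power2_eq_square algebra_simps)
  then have lag': "(a * d - b * c)\<^sup>2 = 1 - (p + q)\<^sup>2" using u v by simp
  have AB: "A * B > 0" using A by simp
  show ?thesis
  proof (cases "p * q > 0")
    case True
    have "p > 0 \<and> q > 0"
    proof (rule ccontr)
      assume "\<not> (p > 0 \<and> q > 0)"
      then have "p < 0 \<and> q < 0" using True by (metis mult_pos_neg mult_neg_pos not_less_iff_gr_or_eq mult_zero_left mult_zero_right less_irrefl)
      then have "A * p + B * q < 0" using A by (smt (verit) mult_pos_neg)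
      then show False using hp by simp
    qed
    then have pq: "p > 0" "q > 0" by auto
    have t1: "A * B * (A\<^sup>2 - 1) * p\<^sup>2 > 0" using A pq by (simp add: power_gt1_lemma)
    have t2: "A * B * (B\<^sup>2 - 1) * q\<^sup>2 > 0" using A pq by simp
    have A2: "A\<^sup>2 > 1" "B\<^sup>2 > 1" using A by (simp_all add: one_less_power)
    have "A\<^sup>2 * (B\<^sup>2 - 1) > 0" using A2 by (intro mult_pos_pos) auto
    moreover have "B\<^sup>2 * (A\<^sup>2 - 1) > 0" using A2 by (intro mult_pos_pos) auto
    ultimately have "A\<^sup>2 * B\<^sup>2 > A\<^sup>2" "A\<^sup>2 * B\<^sup>2 > B\<^sup>2" by (simp_all add: algebra_simps)
    then have t3: "(2 * A\<^sup>2 * B\<^sup>2 - A\<^sup>2 - B\<^sup>2) * (p * q) > 0" using True by simp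
    have "(A * a * d - B * b * c) * (B * a * d - A * b * c) = A * B * (1 - (p + q)\<^sup>2) - (A - B)\<^sup>2 * (p * q)"
      using id1 lag' by simp
    also have "\<dots> = A * B * ((A * p + B * q)\<^sup>2 - (p + q)\<^sup>2) - (A - B)\<^sup>2 * (p * q)" using hp by simp
    also have "\<dots> = A * B * (A\<^sup>2 - 1) * p\<^sup>2 + A * B * (B\<^sup>2 - 1) * q\<^sup>2 + (2 * A\<^sup>2 * B\<^sup>2 - A\<^sup>2 - B\<^sup>2) * (p * q)"
      by (simp add: power2_eq_square algebra_simps)
    finally show ?thesis using t1 t2 t3 by linarith
  next
    case False
    have c1a: "c\<^sup>2 \<le> 1" using v zero_le_power2[of d] by linarith
    have c1b: "d\<^sup>2 \<le> 1" using v zero_le_power2[of c] by linarith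
    note c1 = c1a c1b
    have "p\<^sup>2 + q\<^sup>2 = a\<^sup>2 * c\<^sup>2 + b\<^sup>2 * d\<^sup>2" unfolding p_def q_def by (simp add: power_mult_distrib)
    also have "\<dots> \<le> a\<^sup>2 * 1 + b\<^sup>2 * 1"
      using c1 by (intro add_mono mult_left_mono) auto
    finally have pq2: "p\<^sup>2 + q\<^sup>2 \<le> 1" using u by simp
    have lt: "(p + q)\<^sup>2 < 1"
    proof (rule ccontr)
      assume "\<not> (p + q)\<^sup>2 < 1"
      then have "p\<^sup>2 + q\<^sup>2 + 2 * (p * q) \<ge> 1" by (simp add: power2_eq_square algebra_simps)
      then have pq0: "p * q = 0" and s1: "p\<^sup>2 + q\<^sup>2 = 1" using pq2 False by linarith+
      show False
      proof (cases "p = 0")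
        case True
        then have "q = 1 / B" using hp A by (simp add: field_simps)
        moreover have "q\<^sup>2 = 1" using s1 True by simp
        ultimately have "1 / B\<^sup>2 = 1" by (simp add: power_divide)
        then show False using A one_less_power[of B 2] by (simp add: field_simps)
      next
        case False
        then have "q = 0" using pq0 by simp
        then have "p = 1 / A" using hp A by (simp add: field_simps)
        moreover have "p\<^sup>2 = 1" using s1 \<open>q = 0\<close> by simp
        ultimately have "1 / A\<^sup>2 = 1" by (simp add: power_divide)
        then show False using A one_less_power[of A 2] by (simp add: field_simps)
      qed
    qed
    have "A * B * (a * d - b * c)\<^sup>2 > 0" using lt lag' AB by simp
    moreover have "(A - B)\<^sup>2 * (p * q) \<le> 0" using False by (simp add: mult_nonneg_nonpos)
    ultimately show ?thesis using id1 by linarith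
  qed
qed


definition gam :: "real \<Rightarrow> real \<Rightarrow> real \<Rightarrow> real" where
  "gam A B t = arccos (1 / rad A B t)"

definition hh :: "real \<Rightarrow> real \<Rightarrow> real \<Rightarrow> real" where
  "hh A B t = lft A B t + gam A B t"

definition rel :: "real \<Rightarrow> real \<Rightarrow> real \<Rightarrow> real \<Rightarrow> bool" where
  "rel A B x y \<longleftrightarrow> A * cos x * cos y + B * sin x * sin y = 1"

definition sg :: "real \<Rightarrow> real \<Rightarrow> real \<Rightarrow> real \<Rightarrow> real" where
  "sg A B x y = B * sin x * cos y - A * cos x * sin y"

lemma rel_sym: "rel A B x y \<longleftrightarrow> rel A B y x"
  unfolding rel_def by (simp add: mult_ac)

lemma rad_gt1:
  assumes A: "A > 1" "B > 1" shows "rad A B t > 1"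
proof -
  have "(A\<^sup>2 - 1) * (cos t)\<^sup>2 + (B\<^sup>2 - 1) * (sin t)\<^sup>2 > 0"
    by (rule den_pos) (use A one_less_power[of A 2] one_less_power[of B 2] in auto)
  then have "(A * cos t)\<^sup>2 + (B * sin t)\<^sup>2 > (cos t)\<^sup>2 + (sin t)\<^sup>2"
    by (simp add: power_mult_distrib algebra_simps)
  then have "(A * cos t)\<^sup>2 + (B * sin t)\<^sup>2 > 1" by simp
  then show ?thesis unfolding rad_def by simp
qed

lemma gam_props:
  assumes A: "A > 1" "B > 1"
  shows "0 < gam A B t" "gam A B t < pi / 2" "cos (gam A B t) = 1 / rad A B t"
    "sin (gam A B t) > 0"
proof -
  have r: "rad A B t > 1" using rad_gt1[OF A] .
  then have y: "0 < 1 / rad A B t" "1 / rad A B t < 1" by auto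
  show "0 < gam A B t" unfolding gam_def using arccos_lt_bounded[of "1 / rad A B t"] y by auto
  show "gam A B t < pi / 2" unfolding gam_def using arccos_less_arccos[of 0 "1 / rad A B t"] y by auto
  show "cos (gam A B t) = 1 / rad A B t" unfolding gam_def by (rule cos_arccos) (use y in linarith)+
  have "(1 / rad A B t) * (1 / rad A B t) < 1 * 1" using y by (intro mult_strict_mono) auto
  then have yy: "(1 / rad A B t)\<^sup>2 < 1" by (simp add: power2_eq_square)
  have "sin (gam A B t) = sqrt (1 - (1 / rad A B t)\<^sup>2)" unfolding gam_def
    by (rule sin_arccos) (use y in linarith)+
  then show "sin (gam A B t) > 0" using yy by simp
qed

lemma polar2:
  assumes A: "A > 0" "B > 0"
  shows "A * cos x * cos y + B * sin x * sin y = rad A B x * cos (lft A B x - y)"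
    "sg A B x y = rad A B x * sin (lft A B x - y)"
proof -
  have p: "A * cos x = rad A B x * cos (lft A B x)" "B * sin x = rad A B x * sin (lft A B x)"
    using lft_polar[OF A] by auto
  show "A * cos x * cos y + B * sin x * sin y = rad A B x * cos (lft A B x - y)"
    unfolding cos_diff p by (simp add: algebra_simps)
  show "sg A B x y = rad A B x * sin (lft A B x - y)"
    unfolding sin_diff sg_def p by (simp add: algebra_simps)
qed

lemma key_lemma:
  assumes A: "A > 1" "B > 1" and r: "rel A B x y"
  shows "sg A B x y < 0 \<Longrightarrow> \<exists>k::int. y = hh A B x + 2 * pi * k"
    and "sg A B x y > 0 \<Longrightarrow> \<exists>k::int. y = lft A B x - gam A B x + 2 * pi * k"
proof -
  have A0: "A > 0" "B > 0" using A by auto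
  define th where "th = lft A B x - y"
  define g where "g = gam A B x"
  define \<rho> where "\<rho> = rad A B x"
  have rho: "\<rho> > 1" unfolding \<rho>_def using rad_gt1[OF A] .
  have c: "\<rho> * cos th = 1" using polar2(1)[OF A0, of x y] r unfolding rel_def th_def \<rho>_def by simp
  have s: "sg A B x y = \<rho> * sin th" using polar2(2)[OF A0, of x y] unfolding th_def \<rho>_def by simp
  have cg: "cos g = 1 / \<rho>" "sin g > 0" using gam_props[OF A, of x] unfolding g_def \<rho>_def by auto
  have "\<rho> * cos th = \<rho> * cos g" using c cg rho by simp
  then have ct: "cos th = cos g" using rho by simp
  have "(sin th)\<^sup>2 = (sin g)\<^sup>2" by (simp only: sin_squared_eq ct)
  then have sq: "(sin th - sin g) * (sin th + sin g) = 0" by (simp add: power2_eq_square algebra_simps)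
  {
    assume "sg A B x y < 0"
    then have "sin th < 0" using s rho by (simp add: mult_less_0_iff)
    then have "sin th = sin (- g)" using sq cg by auto
    moreover have "cos th = cos (- g)" using ct by simp
    ultimately obtain n :: int where "th = - g + 2 * pi * n" using sin_cos_eq_iff by blast
    then have "y = hh A B x + 2 * pi * of_int (- n)" unfolding th_def g_def hh_def by simp
    then show "\<exists>k::int. y = hh A B x + 2 * pi * k" by blast
  }
  {
    assume "sg A B x y > 0"
    then have "sin th > 0" using s rho by (simp add: zero_less_mult_iff)
    then have "sin th = sin g" using sq cg by auto
    moreover note ct
    ultimately obtain n :: int where "th = g + 2 * pi * n" using sin_cos_eq_iff by blast
    then have "y = lft A B x - gam A B x + 2 * pi * of_int (- n)" unfolding th_def g_def by simp
    then show "\<exists>k::int. y = lft A B x - gam A B x + 2 * pi * k" by blast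
  }
qed

lemma hh_rel:
  assumes A: "A > 1" "B > 1"
  shows "rel A B x (hh A B x)" "sg A B x (hh A B x) < 0"
proof -
  have A0: "A > 0" "B > 0" using A by auto
  have e: "lft A B x - hh A B x = - gam A B x" unfolding hh_def by simp
  have r: "rad A B x > 1" using rad_gt1[OF A] .
  show "rel A B x (hh A B x)" unfolding rel_def polar2(1)[OF A0] e
    using gam_props(3)[OF A, of x] r by simp
  show "sg A B x (hh A B x) < 0" unfolding polar2(2)[OF A0] e
    using gam_props(4)[OF A, of x] r by (simp add: mult_pos_neg)
qed

lemma prod_neg:
  assumes A: "A > 1" "B > 1" and r: "rel A B x y"
  shows "sg A B x y * sg A B y x < 0"
proof -
  have "(A * cos x * sin y - B * sin x * cos y) * (B * cos x * sin y - A * sin x * cos y) > 0"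
    by (rule prod_alg[OF A]) (use r in \<open>auto simp: rel_def\<close>)
  then show ?thesis unfolding sg_def by (simp add: algebra_simps)
qed

lemma hh_shift: "hh A B (t + pi) = hh A B t + pi"
  unfolding hh_def gam_def by (simp add: lft_shift rad_shift)

lemma hh_bound:
  assumes A: "A > 1" "B > 1"
  shows "- (pi / 2) < hh A B t - t" "hh A B t - t < pi"
proof -
  have l: "lft A B t - t < pi / 2 \<and> - (lft A B t - t) < pi / 2"
    using lft_bound[of A B t, unfolded abs_less_iff] .
  have g: "0 < gam A B t" "gam A B t < pi / 2" using gam_props[OF A, of t] by auto
  show "- (pi / 2) < hh A B t - t" "hh A B t - t < pi" using l g unfolding hh_def by linarith+
qed

lemma hh_inv:
  assumes A: "A > 1" "B > 1"
  shows "lft A B (hh A B x) - gam A B (hh A B x) = x"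
    and "hh A B (hh A B x) - x = 2 * gam A B (hh A B x)"
proof -
  define y where "y = hh A B x"
  have r: "rel A B y x" using hh_rel(1)[OF A, of x] rel_sym unfolding y_def by blast
  have "sg A B x y * sg A B y x < 0" using prod_neg[OF A] hh_rel(1)[OF A, of x] unfolding y_def by blast
  then have "sg A B y x > 0" using hh_rel(2)[OF A, of x] unfolding y_def by (simp add: mult_less_0_iff)
  then obtain k :: int where k: "x = lft A B y - gam A B y + 2 * pi * k" using key_lemma(2)[OF A r] by blast
  have e: "hh A B y - x = 2 * gam A B y - 2 * pi * k" using k unfolding hh_def by simp
  have b1: "- (pi / 2) < hh A B y - y" "hh A B y - y < pi" using hh_bound[OF A] by auto
  have b2: "- (pi / 2) < y - x" "y - x < pi" using hh_bound[OF A, of x] unfolding y_def by auto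
  have g: "0 < gam A B y" "gam A B y < pi / 2" using gam_props[OF A] by auto
  have h1: "pi * of_int k < pi * 1" using e b1 b2 g by linarith
  have h2: "pi * (-1) < pi * of_int k" using e b1 b2 g by linarith
  have "of_int k < (1::real)" using h1 by (simp only: mult_less_cancel_left_pos[OF pi_gt_zero])
  moreover have "(-1::real) < of_int k" using h2 by (simp only: mult_less_cancel_left_pos[OF pi_gt_zero])
  ultimately have "k < 1" "-1 < k" by simp_all
  then have "k = 0" by linarith
  then show "lft A B y - gam A B y = x" "hh A B y - x = 2 * gam A B y" using k e by simp_all
qed


lemma hh_inj: assumes A: "A > 1" "B > 1" shows "inj (hh A B)"
proof (rule injI)
  fix x y assume eq: "hh A B x = hh A B y"
  have "x = lft A B (hh A B x) - gam A B (hh A B x)" using hh_inv(1)[OF A, of x] by simp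
  also have "\<dots> = lft A B (hh A B y) - gam A B (hh A B y)" by (simp only: eq)
  also have "\<dots> = y" by (rule hh_inv(1)[OF A])
  finally show "x = y" .
qed

lemma hh_cont: assumes A: "A > 1" "B > 1" shows "continuous_on UNIV (hh A B)"
proof -
  have r: "rad A B t > 1" for t using rad_gt1[OF A] .
  have b: "- 1 \<le> 1 / rad A B t \<and> 1 / rad A B t \<le> 1" for t
    using r[of t] by (auto simp: field_simps)
  have nz: "rad A B t \<noteq> 0" for t using r[of t] by auto
  have c1: "continuous_on UNIV (rad A B)" unfolding rad_def[abs_def] by (intro continuous_intros)
  have c2: "continuous_on UNIV (\<lambda>t. 1 / rad A B t)"
    by (intro continuous_intros c1) (simp add: nz)
  have c3: "continuous_on UNIV (\<lambda>t. arccos (1 / rad A B t))"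
    by (rule continuous_on_arccos[OF c2]) (simp add: b)
  have c4: "continuous_on UNIV (lft A B)" using lft_cont A by simp
  show ?thesis unfolding hh_def[abs_def] gam_def using continuous_on_add[OF c4 c3] by simp
qed

lemma hh_mono: assumes A: "A > 1" "B > 1" and "x < y" shows "hh A B x < hh A B y"
proof -
  have sh: "\<And>t. hh A B (t + pi) = hh A B t + pi" by (rule hh_shift)
  show ?thesis by (rule mono_shift[OF hh_cont[OF A] hh_inj[OF A] sh assms(3)])
qed

lemma FF_bounds: assumes A: "A > 1" "B > 1"
  shows "0 < hh A B (hh A B x) - x" "hh A B (hh A B x) - x < pi"
  using hh_inv(2)[OF A, of x] gam_props(1,2)[OF A, of "hh A B x"] by auto

lemma iter_shift:
  fixes f :: "real \<Rightarrow> real"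
  assumes sh: "\<And>x. f (x + pi) = f x + pi"
  shows "(f ^^ n) (x + of_int k * pi) = (f ^^ n) x + of_int k * pi"
proof (induction n)
  case 0 then show ?case by simp
next
  case (Suc n)
  then show ?case using shift_int[of f, OF sh] by simp
qed

lemma iter_shift1:
  fixes f :: "real \<Rightarrow> real"
  assumes sh: "\<And>x. f (x + pi) = f x + pi"
  shows "(f ^^ n) (x + pi) = (f ^^ n) x + pi"
  using iter_shift[of f n x 1, OF sh] by simp

lemma iter_mono:
  fixes f :: "real \<Rightarrow> real"
  assumes m: "\<And>x y. x < y \<Longrightarrow> f x < f y"
  shows "x < y \<Longrightarrow> (f ^^ n) x < (f ^^ n) y"
proof (induction n)
  case 0 then show ?case by simp
next
  case (Suc n)
  then show ?case using m by simp
qed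

lemma half_lemma:
  fixes g :: "real \<Rightarrow> real"
  assumes m: "\<And>x y. x < y \<Longrightarrow> g x < g y"
    and sh: "\<And>x k. g (x + of_int k * pi) = g x + of_int k * pi"
    and e: "g (g z) = z + of_int (2 * p) * pi"
  shows "g z = z + of_int p * pi"
proof -
  have e': "g (g z) = z + of_int p * pi + of_int p * pi" using e by (simp add: algebra_simps)
  have s: "g (z + of_int p * pi) = g z + of_int p * pi" by (rule sh)
  show ?thesis
  proof (rule ccontr)
    assume "g z \<noteq> z + of_int p * pi"
    then consider "g z < z + of_int p * pi" | "g z > z + of_int p * pi" by linarith
    then show False
    proof cases
      case 1
      then have "g (g z) < g (z + of_int p * pi)" by (rule m)
      then show False using s e' 1 by linarith
    next
      case 2
      then have "g (z + of_int p * pi) < g (g z)" by (rule m)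
      then show False using s e' 2 by linarith
    qed
  qed
qed


lemma sign_lemma:
  fixes A B s1 s2 ph :: real
  assumes A: "A > 1" "B > 1" and lt: "s1 < s2"
    and e1: "(cos ph - s1 * sin ph)\<^sup>2 / A\<^sup>2 + (sin ph + s1 * cos ph)\<^sup>2 / B\<^sup>2 = 1"
    and e2: "(cos ph - s2 * sin ph)\<^sup>2 / A\<^sup>2 + (sin ph + s2 * cos ph)\<^sup>2 / B\<^sup>2 = 1"
  shows "s1 < 0 \<and> 0 < s2"
proof -
  define c where "c = cos ph"
  define d where "d = sin ph"
  have cd: "c\<^sup>2 + d\<^sup>2 = 1" unfolding c_def d_def by simp
  define al where "al = d\<^sup>2 / A\<^sup>2 + c\<^sup>2 / B\<^sup>2"
  define be where "be = 2 * c * d * (1 / B\<^sup>2 - 1 / A\<^sup>2)"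
  define ga where "ga = c\<^sup>2 / A\<^sup>2 + d\<^sup>2 / B\<^sup>2 - 1"
  have A0: "A \<noteq> 0" "B \<noteq> 0" using A by auto
  have poly: "(c - s * d)\<^sup>2 / A\<^sup>2 + (d + s * c)\<^sup>2 / B\<^sup>2 - 1 = al * s\<^sup>2 + be * s + ga" for s
    unfolding al_def be_def ga_def using A0 by (simp add: field_simps power2_eq_square)
  have f1: "al * s1\<^sup>2 + be * s1 + ga = 0" using poly[of s1] e1 unfolding c_def d_def by simp
  have f2: "al * s2\<^sup>2 + be * s2 + ga = 0" using poly[of s2] e2 unfolding c_def d_def by simp
  have "(s1 - s2) * (al * (s1 + s2) + be) = 0" using f1 f2 by (simp add: power2_eq_square algebra_simps)
  then have v1: "al * (s1 + s2) + be = 0" using lt by simp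
  have b: "be = - (al * s1) - al * s2" using v1 by (simp add: algebra_simps)
  have "ga = - (be * s1) - al * s1\<^sup>2" using f1 by linarith
  also have "\<dots> = - ((- (al * s1) - al * s2) * s1) - al * s1\<^sup>2" by (simp only: b)
  also have "\<dots> = al * s1 * s2" by (simp add: power2_eq_square algebra_simps)
  finally have v2: "ga = al * s1 * s2" .
  have A2: "A\<^sup>2 > 1" "B\<^sup>2 > 1" using A one_less_power[of A 2] one_less_power[of B 2] by auto
  have i1: "1 / A\<^sup>2 < 1" using A2 by (subst divide_less_eq_1_pos) auto
  have i2: "1 / B\<^sup>2 < 1" using A2 by (subst divide_less_eq_1_pos) auto
  have al: "al > 0" unfolding al_def c_def d_def
    using den_pos[of "1 / B\<^sup>2" "1 / A\<^sup>2" ph] A2 A0 by (simp add: add.commute)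
  have "(1 - 1 / A\<^sup>2) * c\<^sup>2 + (1 - 1 / B\<^sup>2) * d\<^sup>2 > 0" unfolding c_def d_def
    by (rule den_pos) (use i1 i2 in auto)
  then have ga: "ga < 0" unfolding ga_def using cd by (simp add: algebra_simps)
  have "al * (s1 * s2) < 0" using v2 ga by (simp add: mult.assoc)
  then have "s1 * s2 < 0" using al by (simp add: mult_less_0_iff)
  then show ?thesis using lt by (auto simp: mult_less_0_iff)
qed


definition ept :: "real \<Rightarrow> real \<Rightarrow> real \<Rightarrow> complex" where
  "ept a b t = Complex (a * cos t) (b * sin t)"

lemma on_ellipse_iff: "a \<noteq> 0 \<Longrightarrow> b \<noteq> 0 \<Longrightarrow> on_ellipse a b z \<longleftrightarrow> (Re z / a)\<^sup>2 + (Im z / b)\<^sup>2 = 1"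
  by (simp add: on_ellipse_def power_divide)

lemma on_ellipse_ex:
  assumes "a > 0" "b > 0" "on_ellipse a b z" shows "\<exists>t. z = ept a b t"
proof -
  have "(Re z / a)\<^sup>2 + (Im z / b)\<^sup>2 = 1" using assms on_ellipse_iff by auto
  then obtain t where t: "Re z / a = cos t" "Im z / b = sin t" using sincos_total_2pi by metis
  have "z = ept a b t" unfolding ept_def using t assms by (intro complex_eqI) (simp_all add: field_simps)
  then show ?thesis by blast
qed

lemma ept_per: "ept a b (t + 2 * pi * of_int n) = ept a b t"
proof -
  have "sin (t + 2 * pi * of_int n) = sin t \<and> cos (t + 2 * pi * of_int n) = cos t"
    using sin_cos_eq_iff by blast
  then show ?thesis unfolding ept_def by simp
qed

lemma recon:
  fixes c d q1 q2 :: real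
  assumes cd: "c\<^sup>2 + d\<^sup>2 = 1" and h: "q1 * c + q2 * d = 1"
  shows "c - (q2 * c - q1 * d) * d = q1" "d + (q2 * c - q1 * d) * c = q2"
proof -
  have "c - (q2 * c - q1 * d) * d = c * (q1 * c + q2 * d) - (q2 * c - q1 * d) * d" using h by simp
  also have "\<dots> = q1 * (c\<^sup>2 + d\<^sup>2)" by (simp add: power2_eq_square algebra_simps)
  finally show "c - (q2 * c - q1 * d) * d = q1" using cd by simp
  have "d + (q2 * c - q1 * d) * c = d * (q1 * c + q2 * d) + (q2 * c - q1 * d) * c" using h by simp
  also have "\<dots> = q2 * (c\<^sup>2 + d\<^sup>2)" by (simp add: power2_eq_square algebra_simps)
  finally show "d + (q2 * c - q1 * d) * c = q2" using cd by simp
qed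

lemma ell_unit: "(A::real) \<noteq> 0 \<Longrightarrow> B \<noteq> 0 \<Longrightarrow> (A * cos x)\<^sup>2 / A\<^sup>2 + (B * sin x)\<^sup>2 / B\<^sup>2 = 1"
  by (simp add: power_mult_distrib)

lemma chord:
  assumes pos: "ae > 0" "be > 0" "ac > 0" "bc > 0"
    and A: "ae / ac > 1" "be / bc > 1"
    and P: "P = ept ae be x" and R: "R = ept ae be y" and ne: "R \<noteq> P"
    and tg: "tangent_to ac bc P R" and cc: "Im (cnj P * R) > 0"
  shows "\<exists>ph mu. contact_point ac bc P R = ept ac bc ph \<and> rel (ae / ac) (be / bc) x ph
    \<and> rel (ae / ac) (be / bc) y ph \<and> sg (ae / ac) (be / bc) x ph < 0 \<and> sg (ae / ac) (be / bc) y ph > 0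
    \<and> mu > 0 \<and> R - P = complex_of_real mu * Complex (- ac * sin ph) (bc * cos ph)"
proof -
  define A where "A = ae / ac"
  define B where "B = be / bc"
  have A1: "A > 1" "B > 1" using A unfolding A_def B_def by auto
  have nz: "ac \<noteq> 0" "bc \<noteq> 0" "A \<noteq> 0" "B \<noteq> 0" using pos A1 by auto
  from tg have ex: "\<exists>!Q. Q \<in> line_thru P R \<and> on_ellipse ac bc Q" unfolding tangent_to_def .
  then obtain Q where Qd: "Q \<in> line_thru P R \<and> on_ellipse ac bc Q"
    and uq0: "\<forall>Q'. Q' \<in> line_thru P R \<and> on_ellipse ac bc Q' \<longrightarrow> Q' = Q"
    by (rule ex1E)
  have uq: "Q' = Q" if "Q' \<in> line_thru P R \<and> on_ellipse ac bc Q'" for Q' using uq0 that by simp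
  have cp: "contact_point ac bc P R = Q" unfolding contact_point_def by (rule the1_equality[OF ex Qd])
  have "Q \<in> line_thru P R" using Qd by simp
  then obtain s0 where s0: "Q = P + complex_of_real s0 * (R - P)" unfolding line_thru_def by auto
  define p1 where "p1 = A * cos x"
  define p2 where "p2 = B * sin x"
  define u where "u = Re (R - P) / ac"
  define v where "v = Im (R - P) / bc"
  have ReP: "Re P = ac * p1" "Im P = bc * p2" unfolding P ept_def p1_def p2_def A_def B_def using nz by simp_all
  have ReR: "Re R = ac * (p1 + u)" "Im R = bc * (p2 + v)" unfolding u_def v_def using ReP nz
    by (simp_all add: field_simps)
  have ReRy: "A * cos y = p1 + u" "B * sin y = p2 + v"
    using ReR nz unfolding R ept_def A_def B_def by (simp_all add: field_simps)
  have onE: "on_ellipse ac bc (P + complex_of_real s * (R - P)) \<longleftrightarrow> (p1 + s * u)\<^sup>2 + (p2 + s * v)\<^sup>2 = 1" for s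
  proof -
    have "Re (P + complex_of_real s * (R - P)) / ac = p1 + s * u"
      using ReP nz unfolding u_def by (simp add: field_simps)
    moreover have "Im (P + complex_of_real s * (R - P)) / bc = p2 + s * v"
      using ReP nz unfolding v_def by (simp add: field_simps)
    ultimately show ?thesis using on_ellipse_iff[OF nz(1,2)] by simp
  qed
  define c where "c = p1 + s0 * u"
  define d where "d = p2 + s0 * v"
  have cd: "c\<^sup>2 + d\<^sup>2 = 1" using Qd onE[of s0] s0 unfolding c_def d_def by simp
  have uv: "u\<^sup>2 + v\<^sup>2 > 0"
  proof (rule ccontr)
    assume "\<not> u\<^sup>2 + v\<^sup>2 > 0"
    then have "u\<^sup>2 = 0" "v\<^sup>2 = 0" using zero_le_power2[of u] zero_le_power2[of v] by linarith+
    then have "u = 0" "v = 0" by simp_all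
    then have "Re (R - P) = 0" "Im (R - P) = 0" unfolding u_def v_def using nz by auto
    then have "R - P = 0" by (simp add: complex_eq_iff)
    then show False using ne by simp
  qed
  have g0: "c * u + d * v = 0"
  proof (rule ccontr)
    assume g: "c * u + d * v \<noteq> 0"
    define dl where "dl = - 2 * (c * u + d * v) / (u\<^sup>2 + v\<^sup>2)"
    define s1 where "s1 = s0 + dl"
    have dl: "dl * (u\<^sup>2 + v\<^sup>2) = - 2 * (c * u + d * v)" unfolding dl_def using uv by simp
    have "(p1 + s1 * u)\<^sup>2 + (p2 + s1 * v)\<^sup>2 = (c + dl * u)\<^sup>2 + (d + dl * v)\<^sup>2"
      unfolding s1_def c_def d_def by (simp add: algebra_simps)
    also have "\<dots> = c\<^sup>2 + d\<^sup>2 + 2 * dl * (c * u + d * v) + dl * (dl * (u\<^sup>2 + v\<^sup>2))"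
      by (simp add: power2_eq_square algebra_simps)
    also have "\<dots> = c\<^sup>2 + d\<^sup>2 + 2 * dl * (c * u + d * v) + dl * (- 2 * (c * u + d * v))" by (simp only: dl)
    also have "\<dots> = 1" using cd by (simp add: algebra_simps)
    finally have "on_ellipse ac bc (P + complex_of_real s1 * (R - P))" using onE by simp
    moreover have "P + complex_of_real s1 * (R - P) \<in> line_thru P R" unfolding line_thru_def by blast
    ultimately have "P + complex_of_real s1 * (R - P) = Q" using uq by blast
    then have "complex_of_real s1 * (R - P) = complex_of_real s0 * (R - P)" using s0 by simp
    then have "s1 = s0" using ne by simp
    then have "dl = 0" unfolding s1_def by simp
    then show False using g uv unfolding dl_def by simp
  qed
  obtain ph where ph: "c = cos ph" "d = sin ph" using sincos_total_2pi[OF cd] by metis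
  have Qe: "Q = ept ac bc ph"
  proof -
    have "Re Q = ac * c" "Im Q = bc * d" unfolding s0 c_def d_def u_def v_def using ReP nz
      by (simp_all add: field_simps)
    then show ?thesis unfolding ept_def ph by (simp add: complex_eq_iff)
  qed
  have pc: "p1 * c + p2 * d = 1"
  proof -
    have "p1 * c + p2 * d = c\<^sup>2 + d\<^sup>2 - s0 * (c * u + d * v)"
      unfolding c_def d_def by (simp add: power2_eq_square algebra_simps)
    then show ?thesis using cd g0 by simp
  qed
  have rc: "(p1 + u) * c + (p2 + v) * d = 1" using pc g0 by (simp add: algebra_simps)
  have relx: "rel A B x ph" unfolding rel_def using pc ph unfolding p1_def p2_def by (simp add: mult.assoc)
  have rely: "rel A B y ph" unfolding rel_def using rc ph ReRy by (simp add: mult.assoc)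
  define mu where "mu = v * c - u * d"
  have u_eq: "u = - mu * d"
  proof -
    have "u = u * (c\<^sup>2 + d\<^sup>2)" using cd by simp
    also have "\<dots> = - mu * d + c * (c * u + d * v)" unfolding mu_def by (simp add: power2_eq_square algebra_simps)
    finally show ?thesis using g0 by simp
  qed
  have v_eq: "v = mu * c"
  proof -
    have "v = v * (c\<^sup>2 + d\<^sup>2)" using cd by simp
    also have "\<dots> = mu * c + d * (c * u + d * v)" unfolding mu_def by (simp add: power2_eq_square algebra_simps)
    finally show ?thesis using g0 by simp
  qed
  have "Im (cnj P * R) = Re P * Im R - Im P * Re R" by simp
  also have "\<dots> = ac * bc * (p1 * v - p2 * u)" unfolding ReP ReR by (simp add: algebra_simps)
  also have "p1 * v - p2 * u = mu * (p1 * c + p2 * d)" unfolding u_eq v_eq by (simp add: algebra_simps)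
  finally have "ac * bc * mu > 0" using cc pc by simp
  moreover have "ac * bc > 0" using pos by simp
  ultimately have mu: "mu > 0" using zero_less_mult_pos by blast
  have RP: "R - P = complex_of_real mu * Complex (- ac * sin ph) (bc * cos ph)"
  proof -
    have "Re (R - P) = ac * u" "Im (R - P) = bc * v" unfolding u_def v_def using nz by simp_all
    then show ?thesis unfolding u_eq v_eq ph by (simp add: complex_eq_iff algebra_simps)
  qed
  define s1 where "s1 = p2 * c - p1 * d"
  define s2 where "s2 = (p2 + v) * c - (p1 + u) * d"
  have s12: "s2 = s1 + mu" unfolding s1_def s2_def mu_def by (simp add: algebra_simps)
  have sgx: "sg A B x ph = s1" unfolding sg_def s1_def p1_def p2_def ph by (simp add: algebra_simps)
  have sgy: "sg A B y ph = s2" unfolding sg_def s2_def ReRy[symmetric] ph by (simp add: algebra_simps)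
  have e1: "(cos ph - s1 * sin ph)\<^sup>2 / A\<^sup>2 + (sin ph + s1 * cos ph)\<^sup>2 / B\<^sup>2 = 1"
    using recon[OF cd pc] ell_unit[OF nz(3,4), of x] unfolding s1_def p1_def p2_def ph by simp
  have e2: "(cos ph - s2 * sin ph)\<^sup>2 / A\<^sup>2 + (sin ph + s2 * cos ph)\<^sup>2 / B\<^sup>2 = 1"
    using recon[OF cd rc] ell_unit[OF nz(3,4), of y] ReRy unfolding s2_def ph by simp
  have "s1 < 0 \<and> 0 < s2" by (rule sign_lemma[OF A1 _ e1 e2]) (use s12 mu in simp)
  then show ?thesis using cp Qe relx rely sgx sgy mu RP unfolding A_def B_def by blast
qed


lemma step:
  assumes pos: "ae > 0" "be > 0" "ac > 0" "bc > 0"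
    and A: "ae / ac > 1" "be / bc > 1"
    and P: "P = ept ae be x" and onR: "on_ellipse ae be R" and ne: "R \<noteq> P"
    and tg: "tangent_to ac bc P R" and cc: "Im (cnj P * R) > 0"
  shows "R = ept ae be (hh (ae / ac) (be / bc) (hh (ae / ac) (be / bc) x))"
    "contact_point ac bc P R = ept ac bc (hh (ae / ac) (be / bc) x)"
    "\<exists>mu>0. R - P = complex_of_real mu * Complex (- ac * sin (hh (ae / ac) (be / bc) x)) (bc * cos (hh (ae / ac) (be / bc) x))"
proof -
  define A where "A = ae / ac"
  define B where "B = be / bc"
  have A1: "A > 1" "B > 1" using A unfolding A_def B_def by auto
  obtain y where R: "R = ept ae be y" using on_ellipse_ex[OF pos(1,2) onR] by blast
  obtain ph mu where c: "contact_point ac bc P R = ept ac bc ph" "rel A B x ph" "rel A B y ph"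
    "sg A B x ph < 0" "sg A B y ph > 0" "mu > 0"
    "R - P = complex_of_real mu * Complex (- ac * sin ph) (bc * cos ph)"
    using chord[OF pos A P R ne tg cc] unfolding A_def B_def by blast
  obtain k :: int where k: "ph = hh A B x + 2 * pi * k" using key_lemma(1)[OF A1 c(2) c(4)] by blast
  have r2: "rel A B ph y" using c(3) rel_sym by blast
  have "sg A B y ph * sg A B ph y < 0" using prod_neg[OF A1 c(3)] .
  then have "sg A B ph y < 0" using c(5) by (simp add: mult_less_0_iff)
  then obtain k' :: int where k': "y = hh A B ph + 2 * pi * k'" using key_lemma(1)[OF A1 r2] by blast
  have sh: "\<And>t. hh A B (t + pi) = hh A B t + pi" by (rule hh_shift)
  have "hh A B ph = hh A B (hh A B x) + of_int (2 * k) * pi"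
    using shift_int[of "hh A B", OF sh, of "hh A B x" "2 * k"] k by (simp add: algebra_simps)
  then have "y = hh A B (hh A B x) + 2 * pi * of_int (k + k')" using k' by (simp add: algebra_simps)
  then have "R = ept ae be (hh A B (hh A B x))" by (simp only: R ept_per)
  then show "R = ept ae be (hh (ae / ac) (be / bc) (hh (ae / ac) (be / bc) x))"
    unfolding A_def B_def .
  have "contact_point ac bc P R = ept ac bc (hh A B x)" unfolding c(1) k by (simp only: ept_per)
  then show "contact_point ac bc P R = ept ac bc (hh (ae / ac) (be / bc) x)"
    unfolding A_def B_def .
  have "sin ph = sin (hh A B x) \<and> cos ph = cos (hh A B x)" using k sin_cos_eq_iff by blast
  then show "\<exists>mu>0. R - P = complex_of_real mu * Complex (- ac * sin (hh (ae / ac) (be / bc) x)) (bc * cos (hh (ae / ac) (be / bc) x))"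
    using c(6,7) unfolding A_def[symmetric] B_def[symmetric] by auto
qed

lemma ept_eq: assumes "a \<noteq> 0" "b \<noteq> 0" "ept a b s = ept a b t" shows "\<exists>n::int. s = t + 2 * pi * n"
proof -
  have "sin s = sin t \<and> cos s = cos t" using assms unfolding ept_def by (simp add: complex_eq_iff)
  then show ?thesis using sin_cos_eq_iff by blast
qed

lemma ept_pi: "ept a b (t + pi) = - ept a b t"
  unfolding ept_def by (simp add: complex_eq_iff)

lemma ept_int_pi:
  shows "even p \<Longrightarrow> ept a b (t + of_int p * pi) = ept a b t"
    and "odd p \<Longrightarrow> ept a b (t + of_int p * pi) = - ept a b t"
proof -
  assume "even p"
  then obtain q where "p = 2 * q" by blast
  then have "t + of_int p * pi = t + 2 * pi * of_int q" by simp
  then show "ept a b (t + of_int p * pi) = ept a b t" by (simp only: ept_per)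
next
  assume "odd p"
  then obtain q where "p = 2 * q + 1" by (metis oddE)
  then have "t + of_int p * pi = (t + pi) + 2 * pi * of_int q" by (simp add: algebra_simps)
  then show "ept a b (t + of_int p * pi) = - ept a b t" by (simp only: ept_per ept_pi)
qed

lemma alpha_ept: "ac \<noteq> 0 \<Longrightarrow> bc \<noteq> 0 \<Longrightarrow> alpha ae be ac bc (ept ac bc t) = ept ae be t"
  unfolding alpha_def ept_def by simp

lemma funpow_double: "((\<lambda>t. f (f t)) ^^ k) = f ^^ (2 * k)"
proof (induction k)
  case 0 then show ?case by simp
next
  case (Suc k)
  have "f ^^ (2 * Suc k) = f ^^ (Suc (Suc (2 * k)))" by simp
  then show ?case using Suc by (simp add: funpow_Suc_right[symmetric] del: funpow.simps) (simp add: fun_eq_iff)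
qed

lemma periodic_int:
  assumes "\<And>i. P (i + int N) = P i"
  shows "P (i + int N * q) = P i"
proof -
  have nat: "P (j + int N * int n) = P j" for j n
  proof (induction n)
    case 0 then show ?case by simp
  next
    case (Suc n)
    have "P (j + int N * int (Suc n)) = P ((j + int N * int n) + int N)" by (simp add: algebra_simps)
    also have "\<dots> = P j" using assms Suc by simp
    finally show ?case .
  qed
  show ?thesis
  proof (cases "q \<ge> 0")
    case True
    then have "q = int (nat q)" by simp
    then show ?thesis using nat[of i "nat q"] by metis
  next
    case False
    define n where "n = nat (- q)"
    have q: "q = - int n" using False unfolding n_def by simp
    have "P (i + int N * q) = P ((i + int N * q) + int N * int n)" by (rule nat[symmetric])
    also have "(i + int N * q) + int N * int n = i" unfolding q by (simp add: algebra_simps)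
    finally show ?thesis .
  qed
qed


lemma ept_polar: "a > 0 \<Longrightarrow> b > 0 \<Longrightarrow> ept a b t = complex_of_real (rad a b t) * cis (lft a b t)"
  using lft_polar[of a b t] unfolding ept_def by (simp add: complex_eq_iff)

lemma tang_ept: "Complex (- ac * sin t) (bc * cos t) = ept ac bc (t + pi / 2)"
  unfolding ept_def by (simp add: cos_add sin_add)

lemma arg_ratio:
  assumes m: "m0 > 0" "m1 > 0" and r: "r0 > 0" "r1 > 0" and d: "0 < b - a" "b - a < pi"
  shows "Arg ((complex_of_real m1 * (complex_of_real r1 * cis b)) / (complex_of_real m0 * (complex_of_real r0 * cis a))) = b - a"
proof -
  have "(complex_of_real m1 * (complex_of_real r1 * cis b)) / (complex_of_real m0 * (complex_of_real r0 * cis a))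
      = complex_of_real (m1 * r1 / (m0 * r0)) * (cis b / cis a)"
    using m r by (simp add: field_simps)
  also have "\<dots> = complex_of_real (m1 * r1 / (m0 * r0)) * exp (\<i> * complex_of_real (b - a))"
    by (simp only: cis_divide[of b a] cis_conv_exp[of "b - a"])
  finally have eq: "(complex_of_real m1 * (complex_of_real r1 * cis b)) / (complex_of_real m0 * (complex_of_real r0 * cis a))
      = complex_of_real (m1 * r1 / (m0 * r0)) * exp (\<i> * complex_of_real (b - a))" .
  have pos: "m1 * r1 / (m0 * r0) > 0" using m r by simp
  show ?thesis by (rule Arg_unique[OF eq[symmetric] pos]) (use d in auto)
qed


lemma iter_half:
  fixes f :: "real \<Rightarrow> real"
  assumes fm: "\<And>x y. x < y \<Longrightarrow> f x < f y" and fs: "\<And>t. f (t + pi) = f t + pi"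
    and e: "(f ^^ m) ((f ^^ m) z) = z + of_int (2 * p) * pi"
  shows "(f ^^ m) z = z + of_int p * pi"
proof (rule half_lemma)
  show "\<And>x y. x < y \<Longrightarrow> (f ^^ m) x < (f ^^ m) y" using iter_mono[of f, OF fm] by blast
  show "\<And>x k. (f ^^ m) (x + of_int k * pi) = (f ^^ m) x + of_int k * pi" using iter_shift[of f, OF fs] by blast
  show "(f ^^ m) ((f ^^ m) z) = z + of_int (2 * p) * pi" by (rule e)
qed

theorem corollary4p2:
  fixes ac bc ke ae be :: real and P :: "int \<Rightarrow> complex" and N \<tau> :: nat
  assumes "ac > bc" and "bc > 0" and "ke > 0"
    and "ae > 0" and "be > 0" and "ae\<^sup>2 = ac\<^sup>2 + ke" and "be\<^sup>2 = bc\<^sup>2 + ke"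
    and "periodic_billiard ae be ac bc P N"
    and "counterclockwise P"
    and "turning_number P N \<tau>"
  shows "(even N \<and> odd \<tau> \<longrightarrow> (\<forall>i. P (i + int (N div 2)) = - P i))
    \<and> (\<forall>n. N = 2 * n + 1 \<and> odd \<tau> \<longrightarrow>
          (\<forall>i. conjugate_billiard ae be ac bc P (i + int n) = - P i))
    \<and> (\<forall>n. N = 2 * n + 1 \<and> even \<tau> \<longrightarrow>
          (\<forall>i. P i = conjugate_billiard ae be ac bc P (i + int n)))"
proof -
  have ac0: "ac > 0" using assms(1,2) by simp
  have bc0: "bc > 0" using assms(2) .
  have ae0: "ae > 0" and be0: "be > 0" using assms(4,5) .
  have "ac\<^sup>2 < ae\<^sup>2" using assms(3,6) by simp
  then have "ac < ae" using less_imp_le[OF ae0] by (rule power_less_imp_less_base)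
  then have A1: "ae / ac > 1" using ac0 by (simp add: field_simps)
  have "bc\<^sup>2 < be\<^sup>2" using assms(3,7) by simp
  then have "bc < be" using less_imp_le[OF be0] by (rule power_less_imp_less_base)
  then have B1: "be / bc > 1" using bc0 by (simp add: field_simps)
  have AB: "ae / ac > 1" "be / bc > 1" using A1 B1 .
  have bil: "billiard ae be ac bc P" and lp: "least_period P N"
    using assms(8) unfolding periodic_billiard_def by auto
  have onE: "\<And>i. on_ellipse ae be (P i)" and ne: "\<And>i. P (i + 1) \<noteq> P i"
    and tg: "\<And>i. tangent_to ac bc (P i) (P (i + 1))"
    using bil unfolding billiard_def by auto
  have ccw: "\<And>i. Im (cnj (P i) * P (i + 1)) > 0" using assms(9) unfolding counterclockwise_def by auto
  have Npos: "N > 0" and per: "\<And>i. P (i + int N) = P i" using lp unfolding least_period_def by auto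
  define H where "H = hh (ae / ac) (be / bc)"
  define F where "F = (\<lambda>t. H (H t))"
  have stp: "P (i + 1) = ept ae be (F x) \<and> contact_point ac bc (P i) (P (i + 1)) = ept ac bc (H x)
      \<and> (\<exists>mu>0. P (i + 1) - P i = complex_of_real mu * Complex (- ac * sin (H x)) (bc * cos (H x)))"
    if "P i = ept ae be x" for i x
    using step[OF ae0 be0 ac0 bc0 A1 B1 that onE[of "i + 1"] ne[of i] tg[of i] ccw[of i]]
    unfolding F_def H_def by blast
  obtain x0 where x0: "P 0 = ept ae be x0" using on_ellipse_ex[OF ae0 be0 onE[of 0]] by blast
  define X where "X n = (F ^^ n) x0" for n
  have XS: "X (Suc n) = F (X n)" for n unfolding X_def by simp
  have Xadd: "X (k + j) = (F ^^ k) (X j)" for k j unfolding X_def by (simp add: funpow_add)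
  have PX: "P (int n) = ept ae be (X n)" for n
  proof (induction n)
    case 0 then show ?case using x0 unfolding X_def by simp
  next
    case (Suc n)
    have "P (int n + 1) = ept ae be (F (X n))" using stp[OF Suc] by blast
    then show ?case by (simp add: XS add.commute)
  qed
  have CX: "contact_point ac bc (P (int n)) (P (int n + 1)) = ept ac bc (H (X n))" for n
    using stp[OF PX[of n]] by blast
  have DX: "\<exists>mu>0. P (int n + 1) - P (int n) = complex_of_real mu * ept ac bc (H (X n) + pi / 2)" for n
    using stp[OF PX[of n]] tang_ept by metis
  have Hmono: "H x < H y" if "x < y" for x y unfolding H_def using hh_mono[OF AB that] .
  have Hsh: "H (t + pi) = H t + pi" for t unfolding H_def by (rule hh_shift)
  have Fmono: "F x < F y" if "x < y" for x y unfolding F_def using Hmono that by blast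
  have Fsh: "F (t + pi) = F t + pi" for t unfolding F_def using Hsh by simp
  have FF: "0 < F z - z" "F z - z < pi" for z unfolding F_def H_def using FF_bounds[OF AB] by auto
  have Hint: "H (t + of_int k * pi) = H t + of_int k * pi" for t k using shift_int[of H, OF Hsh] .
  have Fint: "(F ^^ n) (t + of_int k * pi) = (F ^^ n) t + of_int k * pi" for n t k
    using iter_shift[of F, OF Fsh] .
  have "ept ae be (X N) = ept ae be x0" using PX[of N] per[of 0] x0 by simp
  then obtain p :: int where "X N = x0 + 2 * pi * p" using ept_eq ae0 be0 by (metis less_irrefl)
  then have XN: "X N = x0 + of_int (2 * p) * pi" by simp
  have Xsh: "X (j + N) = X j + of_int (2 * p) * pi" for j
  proof -
    have "X (j + N) = (F ^^ j) ((F ^^ N) x0)" unfolding X_def by (simp add: funpow_add)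
    also have "\<dots> = (F ^^ j) (x0 + of_int (2 * p) * pi)" using XN unfolding X_def by simp
    also have "\<dots> = X j + of_int (2 * p) * pi" unfolding X_def by (rule Fint)
    finally show ?thesis .
  qed
  define om where "om t = lft ac bc (t + pi / 2)" for t
  have om_mono: "om x < om y" if "x < y" for x y unfolding om_def using lft_mono[OF ac0 bc0] that by simp
  have om_sh: "om (t + pi) = om t + pi" for t unfolding om_def using lft_shift[of ac bc "t + pi / 2"]
    by (simp add: algebra_simps)
  have om_int: "om (t + of_int k * pi) = om t + of_int k * pi" for t k using shift_int[of om, OF om_sh] .
  have ext: "ext_angle P (int n + 1) = om (H (X (Suc n))) - om (H (X n))" for n
  proof -
    obtain m0 where m0: "m0 > 0" "P (int n + 1) - P (int n) = complex_of_real m0 * ept ac bc (H (X n) + pi / 2)"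
      using DX[of n] by blast
    obtain m1 where m1: "m1 > 0" "P (int (Suc n) + 1) - P (int (Suc n)) = complex_of_real m1 * ept ac bc (H (X (Suc n)) + pi / 2)"
      using DX[of "Suc n"] by blast
    have i1: "int n + 1 + 1 = int (Suc n) + 1" "int n + 1 - 1 = int n" "int n + 1 = int (Suc n)" by simp_all
    have HX: "H (X (Suc n)) = F (H (X n))" unfolding XS F_def by simp
    have d: "0 < om (H (X (Suc n))) - om (H (X n))" "om (H (X (Suc n))) - om (H (X n)) < pi"
    proof -
      define z where "z = H (X n)"
      have "z < F z" "F z < z + pi" using FF[of z] by auto
      then have "om z < om (F z)" "om (F z) < om (z + pi)" using om_mono by auto
      then show "0 < om (H (X (Suc n))) - om (H (X n))" "om (H (X (Suc n))) - om (H (X n)) < pi"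
        unfolding HX z_def[symmetric] om_sh by auto
    qed
    have "ext_angle P (int n + 1) = Arg ((P (int (Suc n) + 1) - P (int (Suc n))) / (P (int n + 1) - P (int n)))"
      unfolding ext_angle_def i1 by simp
    also have "\<dots> = Arg ((complex_of_real m1 * (complex_of_real (rad ac bc (H (X (Suc n)) + pi / 2)) * cis (om (H (X (Suc n))))))
        / (complex_of_real m0 * (complex_of_real (rad ac bc (H (X n) + pi / 2)) * cis (om (H (X n))))))"
      unfolding m0(2) m1(2) ept_polar[OF ac0 bc0] om_def ..
    also have "\<dots> = om (H (X (Suc n))) - om (H (X n))"
      by (rule arg_ratio[OF m0(1) m1(1) rad_pos[OF ac0 bc0] rad_pos[OF ac0 bc0] d])
    finally show ?thesis .
  qed
  have sumext: "(\<Sum>i = 1..int n. ext_angle P i) = om (H (X n)) - om (H (X 0))" for n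
  proof (induction n)
    case 0 then show ?case by simp
  next
    case (Suc n)
    have s: "{1..int (Suc n)} = insert (int n + 1) {1..int n}" by auto
    have "(\<Sum>i = 1..int (Suc n). ext_angle P i) = ext_angle P (int n + 1) + (\<Sum>i = 1..int n. ext_angle P i)"
      unfolding s by (rule sum.insert) auto
    then show ?case using Suc ext[of n] by simp
  qed
  have "om (H (X N)) = om (H x0) + of_int (2 * p) * pi" unfolding XN Hint om_int ..
  then have "(\<Sum>i = 1..int N. ext_angle P i) = of_int (2 * p) * pi" using sumext[of N] unfolding X_def by simp
  then have "2 * real \<tau> * pi = of_int (2 * p) * pi" using assms(10) unfolding turning_number_def by simp
  then have "real \<tau> = of_int p" by simp
  then have ptau: "p = int \<tau>" by simp
  have Pper: "P (i + int N * q) = P i" for i q using periodic_int[of P N, OF per] .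
  have decomp: "\<exists>j q. i = int j + int N * q" for i
  proof -
    have "i = (i mod int N) + int N * (i div int N)" by simp
    moreover have "i mod int N \<ge> 0" using Npos by simp
    ultimately have "i = int (nat (i mod int N)) + int N * (i div int N)" by simp
    then show ?thesis by blast
  qed
  have part1: "P (i + int (N div 2)) = - P i" if ev: "even N" and od: "odd \<tau>" for i
  proof -
    define m where "m = N div 2"
    have Nm: "N = m + m" using ev unfolding m_def by (auto elim!: evenE)
    have oddp: "odd p" using od ptau by simp
    have Xm: "X (j + m) = X j + of_int p * pi" for j
    proof -
      have "(F ^^ m) ((F ^^ m) (X j)) = X (m + (m + j))" by (simp only: Xadd)
      also have "m + (m + j) = j + N" using Nm by simp
      finally have "(F ^^ m) ((F ^^ m) (X j)) = X (j + N)" .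
      then have "(F ^^ m) ((F ^^ m) (X j)) = X j + of_int (2 * p) * pi" using Xsh by simp
      then have "(F ^^ m) (X j) = X j + of_int p * pi" using iter_half[of F m "X j" p, OF Fmono Fsh] by fast
      moreover have "X (j + m) = (F ^^ m) (X j)" using Xadd[of m j] by (simp add: add.commute)
      ultimately show ?thesis by simp
    qed
    have Pj: "P (int j + int m) = - P (int j)" for j
    proof -
      have "P (int j + int m) = P (int (j + m))" by simp
      also have "\<dots> = ept ae be (X j + of_int p * pi)" unfolding PX Xm ..
      also have "\<dots> = - ept ae be (X j)" by (rule ept_int_pi(2)[OF oddp])
      finally show ?thesis using PX[of j] by simp
    qed
    obtain j q where iq: "i = int j + int N * q" using decomp by blast
    have "P (i + int m) = P ((int j + int m) + int N * q)" unfolding iq by (simp add: algebra_simps)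
    also have "\<dots> = P (int j + int m)" by (rule Pper)
    also have "\<dots> = - P (int j)" by (rule Pj)
    also have "P (int j) = P i" unfolding iq by (rule Pper[symmetric])
    finally show ?thesis unfolding m_def .
  qed
  define cj where "cj = conjugate_billiard ae be ac bc P"
  have cjX: "cj (int j) = ept ae be (H (X j))" for j
    unfolding cj_def conjugate_billiard_def using CX[of j] alpha_ept ac0 bc0 by simp
  have cjper: "cj (i + int N * q) = cj i" for i q
  proof -
    have "P (i + int N * q + 1) = P (i + 1)" using Pper[of "i + 1" q] by (simp add: algebra_simps)
    then show ?thesis unfolding cj_def conjugate_billiard_def using Pper[of i q] by simp
  qed
  have odd_case: "cj (int j + int n) = ept ae be (X j + of_int p * pi)" if Nn: "N = 2 * n + 1" for j n
  proof -
    define M where "M = H ^^ N"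
    have Fpow: "F ^^ k = H ^^ (2 * k)" for k unfolding F_def by (rule funpow_double)
    have "M (M (X j)) = (H ^^ (2 * N)) (X j)" unfolding M_def by (simp add: funpow_add mult_2)
    also have "\<dots> = (F ^^ N) (X j)" unfolding Fpow ..
    also have "\<dots> = X (j + N)" using Xadd[of N j] by (simp add: add.commute)
    also have "\<dots> = X j + of_int (2 * p) * pi" by (rule Xsh)
    finally have "(H ^^ N) ((H ^^ N) (X j)) = X j + of_int (2 * p) * pi" unfolding M_def .
    then have MX: "(H ^^ N) (X j) = X j + of_int p * pi" using iter_half[of H N "X j" p, OF Hmono Hsh] by fast
    have "H (X (j + n)) = H ((F ^^ n) (X j))" using Xadd[of n j] by (simp add: add.commute)
    also have "\<dots> = H ((H ^^ (2 * n)) (X j))" unfolding Fpow ..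
    also have "\<dots> = (H ^^ N) (X j)" unfolding Nn by simp
    finally have "H (X (j + n)) = X j + of_int p * pi" using MX by simp
    then show ?thesis using cjX[of "j + n"] by simp
  qed
  have part2: "cj (i + int n) = - P i" if Nn: "N = 2 * n + 1" and od: "odd \<tau>" for i n
  proof -
    have oddp: "odd p" using od ptau by simp
    obtain j q where iq: "i = int j + int N * q" using decomp by blast
    have "cj (i + int n) = cj ((int j + int n) + int N * q)" unfolding iq by (simp add: algebra_simps)
    also have "\<dots> = cj (int j + int n)" by (rule cjper)
    also have "\<dots> = ept ae be (X j + of_int p * pi)" by (rule odd_case[OF Nn])
    also have "\<dots> = - ept ae be (X j)" by (rule ept_int_pi(2)[OF oddp])
    also have "ept ae be (X j) = P (int j)" by (rule PX[symmetric])
    also have "P (int j) = P i" unfolding iq by (rule Pper[symmetric])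
    finally show ?thesis .
  qed
  have part3: "P i = cj (i + int n)" if Nn: "N = 2 * n + 1" and ev: "even \<tau>" for i n
  proof -
    have evp: "even p" using ev ptau by simp
    obtain j q where iq: "i = int j + int N * q" using decomp by blast
    have "cj (i + int n) = cj ((int j + int n) + int N * q)" unfolding iq by (simp add: algebra_simps)
    also have "\<dots> = cj (int j + int n)" by (rule cjper)
    also have "\<dots> = ept ae be (X j + of_int p * pi)" by (rule odd_case[OF Nn])
    also have "\<dots> = ept ae be (X j)" by (rule ept_int_pi(1)[OF evp])
    also have "ept ae be (X j) = P (int j)" by (rule PX[symmetric])
    also have "P (int j) = P i" unfolding iq by (rule Pper[symmetric])
    finally show ?thesis by simp
  qed
  show ?thesis using part1 part2 part3 unfolding cj_def by blast
qed

end
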